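(* Let $(x_t)_{t=1}^T$ and $(a_t)_{t=1}^T$ be sequences with $x_t,a_t>0$ for all $t$. Then for any $\alpha\in[0,1]$, $$\sum_{t=1}^T\frac{x_t^{1-\alpha}a_t}{\sqrt{1+\sum_{s=1}^tx_s^{1-2\alpha}}}\le2\sqrt{\Big(\sum_{t=1}^Tx_ta_t^2\Big)\log\Big(1+\sum_{t=1}^Tx_t^{1-2\alpha}\Big)}.$$ *)

theory Defs
  imports Complex_Main
begin

end

theory Submission
  imports Defs "HOL-Analysis.Analysis"
begin

lemma ln_lower: "0 < (u::real) \<Longrightarrow> 1 - 1/u \<le> ln u"
  using ln_le_minus_one[of "1/u"] by (simp add: ln_div)

lemma log_sum:
  fixes y :: "nat \<Rightarrow> real"
  assumes "\<And>t. 1 \<le> t \<Longrightarrow> t \<le> T \<Longrightarrow> y t \<ge> 0"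
  shows "(\<Sum>t=1..T. y t / (1 + (\<Sum>s=1..t. y s))) \<le> ln (1 + (\<Sum>t=1..T. y t))"
  using assms
proof (induction T)
  case 0
  then show ?case by simp
next
  case (Suc T)
  define S where "S = (\<Sum>s=1..T. y s)"
  have S0: "S \<ge> 0" unfolding S_def using Suc.prems by (intro sum_nonneg) auto
  have y0: "y (Suc T) \<ge> 0" using Suc.prems by auto
  have IH: "(\<Sum>t=1..T. y t / (1 + (\<Sum>s=1..t. y s))) \<le> ln (1 + S)"
    unfolding S_def using Suc.IH Suc.prems by auto
  have SS: "(\<Sum>s=1..Suc T. y s) = S + y (Suc T)" unfolding S_def by simp
  define u where "u = (1 + S + y (Suc T)) / (1 + S)"
  have u0: "u > 0" unfolding u_def using S0 y0 by auto
  have "1 - 1/u = y (Suc T) / (1 + S + y (Suc T))"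
    unfolding u_def using S0 y0 by (simp add: field_simps)
  moreover have "ln u = ln (1 + S + y (Suc T)) - ln (1 + S)"
    unfolding u_def using S0 y0 by (simp add: ln_div)
  ultimately have step: "y (Suc T) / (1 + S + y (Suc T)) \<le> ln (1 + S + y (Suc T)) - ln (1 + S)"
    using ln_lower[OF u0] by simp
  have "(\<Sum>t=1..Suc T. y t / (1 + (\<Sum>s=1..t. y s)))
      = (\<Sum>t=1..T. y t / (1 + (\<Sum>s=1..t. y s))) + y (Suc T) / (1 + S + y (Suc T))"
    using SS by (simp add: add.assoc)
  also have "\<dots> \<le> ln (1 + S + y (Suc T))" using IH step by simp
  finally show ?case using SS by (simp add: add.assoc)
qed

theorem lemma28:
  fixes x a :: "nat \<Rightarrow> real" and T :: nat and \<alpha> :: real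
  assumes "\<And>t. 1 \<le> t \<Longrightarrow> t \<le> T \<Longrightarrow> x t > 0"
      and "\<And>t. 1 \<le> t \<Longrightarrow> t \<le> T \<Longrightarrow> a t > 0"
      and "0 \<le> \<alpha>" and "\<alpha> \<le> 1"
  shows "(\<Sum>t=1..T. x t powr (1 - \<alpha>) * a t / sqrt (1 + (\<Sum>s=1..t. x s powr (1 - 2*\<alpha>))))
         \<le> 2 * sqrt ((\<Sum>t=1..T. x t * (a t)^2) * ln (1 + (\<Sum>t=1..T. x t powr (1 - 2*\<alpha>))))"
proof -
  define y where "y t = x t powr (1 - 2*\<alpha>)" for t
  define S where "S t = (\<Sum>s=1..t. y s)" for t
  define b where "b t = sqrt (x t) * a t" for t
  define c where "c t = sqrt (y t / (1 + S t))" for t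
  have S0: "S t \<ge> 0" for t unfolding S_def y_def by (intro sum_nonneg) auto
  have eq: "x t powr (1 - \<alpha>) * a t / sqrt (1 + S t) = b t * c t" if "1 \<le> t" "t \<le> T" for t
  proof -
    have xp: "x t > 0" using assms(1) that by auto
    have h1: "sqrt (y t) = x t powr ((1 - 2*\<alpha>)/2)"
      unfolding y_def using xp by (simp add: sqrt_def powr_powr root_powr_inverse)
    have h2: "sqrt (x t) = x t powr (1/2)" using xp by (simp add: powr_half_sqrt)
    have "sqrt (x t) * sqrt (y t) = x t powr (1 - \<alpha>)"
    proof -
      have "sqrt (x t) * sqrt (y t) = x t powr (1/2 + (1 - 2*\<alpha>)/2)"
        using h1 h2 xp by (simp add: powr_add)
      also have "1/2 + (1 - 2*\<alpha>)/2 = 1 - \<alpha>" by (simp add: field_simps)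
      finally show ?thesis .
    qed
    then show ?thesis unfolding b_def c_def using S0[of t]
      by (simp add: real_sqrt_divide)
  qed
  have L: "(\<Sum>t=1..T. x t powr (1 - \<alpha>) * a t / sqrt (1 + S t)) = (\<Sum>t=1..T. b t * c t)"
    using eq by (intro sum.cong) auto
  have b2: "(\<Sum>t=1..T. (b t)^2) = (\<Sum>t=1..T. x t * (a t)^2)"
    unfolding b_def using assms(1) by (intro sum.cong) (auto simp: power_mult_distrib less_imp_le)
  have c2: "(\<Sum>t=1..T. (c t)^2) = (\<Sum>t=1..T. y t / (1 + S t))"
    unfolding c_def using S0 by (intro sum.cong) (auto simp: y_def)
  have c2le: "(\<Sum>t=1..T. (c t)^2) \<le> ln (1 + S T)"
    unfolding c2 S_def by (rule log_sum) (auto simp: y_def)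
  have B0: "(\<Sum>t=1..T. (b t)^2) \<ge> 0" by (intro sum_nonneg) auto
  have C0: "(\<Sum>t=1..T. (c t)^2) \<ge> 0" by (intro sum_nonneg) auto
  have "(\<Sum>t=1..T. b t * c t) \<le> sqrt ((\<Sum>t=1..T. b t * c t)^2)" by simp
  also have "\<dots> \<le> sqrt ((\<Sum>t=1..T. (b t)^2) * (\<Sum>t=1..T. (c t)^2))"
    by (intro real_sqrt_le_mono Cauchy_Schwarz_ineq_sum)
  also have "\<dots> \<le> sqrt ((\<Sum>t=1..T. (b t)^2) * ln (1 + S T))"
    by (intro real_sqrt_le_mono mult_left_mono c2le B0)
  also have "\<dots> \<le> 2 * sqrt ((\<Sum>t=1..T. (b t)^2) * ln (1 + S T))"
    using B0 S0[of T] by simp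
  finally show ?thesis using L b2 unfolding S_def y_def by simp
qed

end
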